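(* Let $M$ be a matroid on a finite set $E$ with $r(M)>0$. Then $\cup F(M)=\cup\mathcal{B}(M)$.
   Context: For a matroid $M$: $\mathcal{I}(M)$ its independent sets, $\mathcal{B}(M)$ its bases, $r(M)$ the size of a base, $r(X)$ the rank of $X\subseteq E$. For a set family $S$, $\cup S=\bigcup_{X\in S}X$. $s(M)=\{A\in\mathcal{I}(M): |A|=r(M)-1\}$; $K_M(X)=\{a\in E: r(X\cup\{a\})=r(X)+1\}$; $F(M)=\{K_M(X): X\in s(M)\}$. *)

theory Defs
  imports Main
begin

definition matroid :: "'a set \<Rightarrow> 'a set set \<Rightarrow> bool" where
  "matroid E \<I> \<longleftrightarrow>
     finite E \<and> (\<forall>X\<in>\<I>. X \<subseteq> E) \<and> {} \<in> \<I> \<and>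
     (\<forall>X Y. X \<in> \<I> \<and> Y \<subseteq> X \<longrightarrow> Y \<in> \<I>) \<and>
     (\<forall>X Y. X \<in> \<I> \<and> Y \<in> \<I> \<and> card X < card Y \<longrightarrow> (\<exists>y\<in>Y - X. insert y X \<in> \<I>))"

definition bases :: "'a set set \<Rightarrow> 'a set set" where
  "bases \<I> = {B \<in> \<I>. \<forall>X\<in>\<I>. B \<subseteq> X \<longrightarrow> X = B}"

definition rank_of :: "'a set set \<Rightarrow> 'a set \<Rightarrow> nat" where
  "rank_of \<I> X = Max (card ` {Y \<in> \<I>. Y \<subseteq> X})"

definition mrank :: "'a set \<Rightarrow> 'a set set \<Rightarrow> nat" where
  "mrank E \<I> = rank_of \<I> E"

definition s_sets :: "'a set \<Rightarrow> 'a set set \<Rightarrow> 'a set set" where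
  "s_sets E \<I> = {A \<in> \<I>. card A = mrank E \<I> - 1}"

definition K_set :: "'a set \<Rightarrow> 'a set set \<Rightarrow> 'a set \<Rightarrow> 'a set" where
  "K_set E \<I> X = {a \<in> E. rank_of \<I> (insert a X) = rank_of \<I> X + 1}"

definition F_fam :: "'a set \<Rightarrow> 'a set set \<Rightarrow> 'a set set" where
  "F_fam E \<I> = K_set E \<I> ` s_sets E \<I>"

end

theory Submission
  imports Defs
begin

lemma mE: "matroid E I \<Longrightarrow> X \<in> I \<Longrightarrow> X \<subseteq> E" unfolding matroid_def by blast
lemma mfinE: "matroid E I \<Longrightarrow> finite E" unfolding matroid_def by blast
lemma mempty: "matroid E I \<Longrightarrow> {} \<in> I" unfolding matroid_def by blast
lemma mdown: "matroid E I \<Longrightarrow> X \<in> I \<Longrightarrow> Y \<subseteq> X \<Longrightarrow> Y \<in> I" unfolding matroid_def by blast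
lemma maug: "matroid E I \<Longrightarrow> X \<in> I \<Longrightarrow> Y \<in> I \<Longrightarrow> card X < card Y \<Longrightarrow> \<exists>y\<in>Y - X. insert y X \<in> I"
  unfolding matroid_def by blast

lemma m_fin: assumes "matroid E I" shows "finite {Y\<in>I. Y \<subseteq> S}"
proof -
  have "{Y\<in>I. Y \<subseteq> S} \<subseteq> Pow E" using mE[OF assms] by blast
  moreover have "finite (Pow E)" using mfinE[OF assms] by simp
  ultimately show ?thesis by (rule finite_subset)
qed

lemma m_upper: assumes "matroid E I" "Y \<in> I" "Y \<subseteq> S" shows "card Y \<le> rank_of I S"
  unfolding rank_of_def using m_fin[OF assms(1), of S] assms(2,3)
  by (intro Max_ge) auto

lemma m_att: assumes "matroid E I" shows "\<exists>Y\<in>I. Y \<subseteq> S \<and> card Y = rank_of I S"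
proof -
  have ne: "{} \<in> {Y\<in>I. Y \<subseteq> S}" using mempty[OF assms] by simp
  have "rank_of I S \<in> card ` {Y\<in>I. Y \<subseteq> S}"
    unfolding rank_of_def using m_fin[OF assms, of S] ne by (intro Max_in) auto
  then show ?thesis by force
qed

lemma m_finI: assumes "matroid E I" "X \<in> I" shows "finite X"
  using mE[OF assms] mfinE[OF assms(1)] by (meson finite_subset)

lemma m_rank_ind: assumes "matroid E I" "X \<in> I" shows "rank_of I X = card X"
proof -
  obtain Y where "Y \<in> I" "Y \<subseteq> X" "card Y = rank_of I X" using m_att[OF assms(1)] by blast
  then have "rank_of I X \<le> card X" using m_finI[OF assms] by (metis card_mono)
  moreover have "card X \<le> rank_of I X" using m_upper[OF assms(1,2)] by simp
  ultimately show ?thesis by simp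
qed

lemma m_base_card: assumes "matroid E I" "B \<in> bases I" shows "card B = mrank E I"
proof -
  have B: "B \<in> I" "\<forall>X\<in>I. B \<subseteq> X \<longrightarrow> X = B" using assms(2) unfolding bases_def by auto
  obtain Y where Y: "Y \<in> I" "Y \<subseteq> E" "card Y = mrank E I"
    using m_att[OF assms(1), of E] unfolding mrank_def by blast
  have BE: "B \<subseteq> E" using mE[OF assms(1) B(1)] .
  have le: "card B \<le> mrank E I" using m_upper[OF assms(1) B(1) BE] unfolding mrank_def .
  show ?thesis
  proof (rule ccontr)
    assume "card B \<noteq> mrank E I"
    then have "card B < card Y" using le Y(3) by simp
    then obtain y where "y \<in> Y - B" "insert y B \<in> I"
      using maug[OF assms(1) B(1) Y(1)] by blast
    then show False using B(2) by blast
  qed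
qed

theorem proposition3:
  fixes E :: "'a set" and \<I> :: "'a set set"
  assumes "matroid E \<I>" and "mrank E \<I> > 0"
  shows "\<Union> (F_fam E \<I>) = \<Union> (bases \<I>)"
proof
  show "\<Union> (F_fam E \<I>) \<subseteq> \<Union> (bases \<I>)"
  proof
    fix a assume "a \<in> \<Union> (F_fam E \<I>)"
    then obtain X where X: "X \<in> \<I>" "card X = mrank E \<I> - 1" and a: "a \<in> E"
      "rank_of \<I> (insert a X) = rank_of \<I> X + 1"
      unfolding F_fam_def s_sets_def K_set_def by auto
    have fX: "finite X" using m_finI[OF assms(1) X(1)] .
    have r: "rank_of \<I> (insert a X) = card X + 1" using a(2) m_rank_ind[OF assms(1) X(1)] by simp
    obtain Y where Y: "Y \<in> \<I>" "Y \<subseteq> insert a X" "card Y = card X + 1"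
      using m_att[OF assms(1), of "insert a X"] r by auto
    have aY: "a \<in> Y"
    proof (rule ccontr)
      assume "a \<notin> Y"
      then have "Y \<subseteq> X" using Y(2) by blast
      then have "card Y \<le> card X" using fX by (simp add: card_mono)
      then show False using Y(3) by simp
    qed
    have cY: "card Y = mrank E \<I>" using Y(3) X(2) assms(2) by simp
    have "Y \<in> bases \<I>"
      unfolding bases_def
    proof (intro CollectI conjI ballI impI)
      show "Y \<in> \<I>" by fact
      fix Z assume Z: "Z \<in> \<I>" "Y \<subseteq> Z"
      have ZE: "Z \<subseteq> E" using mE[OF assms(1) Z(1)] .
      have "card Z \<le> card Y" using m_upper[OF assms(1) Z(1) ZE] cY unfolding mrank_def by simp
      then show "Z = Y" using Z(2) m_finI[OF assms(1) Z(1)]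
        by (metis card_seteq)
    qed
    then show "a \<in> \<Union> (bases \<I>)" using aY by blast
  qed
next
  show "\<Union> (bases \<I>) \<subseteq> \<Union> (F_fam E \<I>)"
  proof
    fix a assume "a \<in> \<Union> (bases \<I>)"
    then obtain B where B: "B \<in> bases \<I>" "a \<in> B" by blast
    have BI: "B \<in> \<I>" using B(1) unfolding bases_def by auto
    have fB: "finite B" using m_finI[OF assms(1) BI] .
    have cB: "card B = mrank E \<I>" using m_base_card[OF assms(1) B(1)] .
    define X where "X = B - {a}"
    have XI: "X \<in> \<I>" using mdown[OF assms(1) BI] unfolding X_def by blast
    have cX: "card X = mrank E \<I> - 1" unfolding X_def using cB B(2) fB by simp
    have aE: "a \<in> E" using mE[OF assms(1) BI] B(2) by blast
    have ins: "insert a X = B" unfolding X_def using B(2) by blast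
    have "rank_of \<I> (insert a X) = rank_of \<I> X + 1"
      unfolding ins m_rank_ind[OF assms(1) BI] m_rank_ind[OF assms(1) XI]
      using cX cB assms(2) by simp
    then have "a \<in> K_set E \<I> X" unfolding K_set_def using aE by simp
    moreover have "X \<in> s_sets E \<I>" unfolding s_sets_def using XI cX by simp
    ultimately show "a \<in> \<Union> (F_fam E \<I>)" unfolding F_fam_def by blast
  qed
qed

end
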